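(* For every $x\in\mathbb{C}$ and every $p\in\mathbb{N}$ we have in $\mathcal{A}_0$ $$(a+xb)^p=\sum_{j=0}^p\gamma_j(x)\binom{p}{j}b^ja^{p-j},$$ where $\gamma_0(x)=1$ and $\gamma_j(x):=x(x+1)\cdots(x+j-1)$ for $j\ge1$.
   Context: $\mathcal{A}_0$ is the $\mathbb{C}$-algebra of polynomials in two variables $a,b$ subject to the commutation relation $ab-ba=b^2$. *)

theory Defs
  imports Complex_Main
begin

text \<open>A (unital, associative) C-algebra structure on a ring 'a is given by a
ring homomorphism sc from the complex numbers into the centre of 'a.
The algebra A0 = C<a,b>/(ab - ba - b^2) is the universal C-algebra generated by
two elements a, b with ab - ba = b^2, so an identity holds in A0 iff it holds
for every pair a, b satisfying this relation in every C-algebra.\<close>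

definition complex_scalars :: "(complex \<Rightarrow> 'a::ring_1) \<Rightarrow> bool" where
  "complex_scalars sc \<longleftrightarrow>
     sc 1 = 1 \<and>
     (\<forall>x y. sc (x + y) = sc x + sc y) \<and>
     (\<forall>x y. sc (x * y) = sc x * sc y) \<and>
     (\<forall>x z. sc x * z = z * sc x)"

end

theory Submission
  imports Defs
begin

lemma sc_props:
  assumes "complex_scalars sc"
  shows "sc 1 = 1" "sc (x + y) = sc x + sc y" "sc (x * y) = sc x * sc y" "sc x * z = z * sc x"
  using assms unfolding complex_scalars_def by blast+

lemma sc_zero: assumes "complex_scalars sc" shows "sc 0 = 0"
proof -
  have "sc (0+0) = sc 0 + sc 0" using sc_props(2)[OF assms] .
  then have "sc 0 + 0 = sc 0 + sc 0" by (simp only: add_0_right)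
  then show ?thesis by (rule add_left_imp_eq[symmetric])
qed

lemma sc_nat: assumes "complex_scalars sc" shows "sc (of_nat n) = of_nat n"
  by (induction n) (simp_all add: sc_zero[OF assms] sc_props(1,2)[OF assms])

lemma ab_pow:
  fixes a b :: "'a::ring_1"
  assumes "a * b - b * a = b ^ 2"
  shows "a * b ^ j = b ^ j * a + of_nat j * b ^ Suc j"
proof (induction j)
  case 0 then show ?case by simp
next
  case (Suc j)
  have ab: "a * b = b * a + b * b" using assms by (simp add: power2_eq_square algebra_simps)
  have p2: "b ^ Suc j * b = b ^ Suc (Suc j)" by (rule power_Suc2[symmetric])
  have p1: "b ^ j * b = b ^ Suc j" by (rule power_Suc2[symmetric])
  have "a * b ^ Suc j = (a * b ^ j) * b" by (simp only: power_Suc2 mult.assoc)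
  also have "... = (b ^ j * a + of_nat j * b ^ Suc j) * b" using Suc by simp
  also have "... = b ^ j * (a * b) + of_nat j * (b ^ Suc j * b)"
    by (simp only: distrib_right mult.assoc)
  also have "... = (b ^ j * b) * a + (b ^ j * b) * b + of_nat j * b ^ Suc (Suc j)"
    by (simp only: ab distrib_left mult.assoc p2)
  also have "... = b ^ Suc j * a + (b ^ Suc (Suc j) + of_nat j * b ^ Suc (Suc j))"
    by (simp only: p1 p2 add.assoc)
  also have "... = b ^ Suc j * a + of_nat (Suc j) * b ^ Suc (Suc j)"
    by (simp only: of_nat_Suc distrib_right mult_1_left)
  finally show ?case .
qed

lemma step:
  fixes a b :: "'a::ring_1"
  assumes sc: "complex_scalars sc" and r: "a * b - b * a = b ^ 2"
  shows "(a + sc x * b) * (sc c * (b ^ j * a ^ m)) =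
     sc c * (b ^ j * a ^ Suc m) + sc (c * (of_nat j + x)) * (b ^ Suc j * a ^ m)"
proof -
  have cm: "\<And>y z. sc y * z = z * sc y" by (rule sc_props(4)[OF sc])
  have e1: "a * (sc c * (b ^ j * a ^ m)) = sc c * ((a * b ^ j) * a ^ m)"
    by (simp only: mult.assoc[symmetric] cm[of c a])
  have e2: "sc x * b * (sc c * (b ^ j * a ^ m)) = (sc c * sc x) * (b ^ Suc j * a ^ m)"
  proof -
    have "sc x * b * (sc c * (b ^ j * a ^ m)) = sc x * (b * sc c) * (b ^ j * a ^ m)"
      by (simp only: mult.assoc)
    also have "... = sc x * sc c * (b * (b ^ j * a ^ m))"
      by (simp only: cm[of c b, symmetric] mult.assoc)
    also have "... = (sc c * sc x) * (b ^ Suc j * a ^ m)"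
      by (simp only: power_Suc mult.assoc cm[of x "sc c"])
    finally show ?thesis .
  qed
  have e3: "(a * b ^ j) * a ^ m = b ^ j * a ^ Suc m + of_nat j * (b ^ Suc j * a ^ m)"
    unfolding ab_pow[OF r] by (simp only: distrib_right mult.assoc power_Suc)
  have "(a + sc x * b) * (sc c * (b ^ j * a ^ m)) =
     a * (sc c * (b ^ j * a ^ m)) + sc x * b * (sc c * (b ^ j * a ^ m))"
    by (rule distrib_right)
  also have "... = sc c * (b ^ j * a ^ Suc m + of_nat j * (b ^ Suc j * a ^ m)) + (sc c * sc x) * (b ^ Suc j * a ^ m)"
    unfolding e1 e2 e3 ..
  also have "... = sc c * (b ^ j * a ^ Suc m) + (sc c * of_nat j + sc c * sc x) * (b ^ Suc j * a ^ m)"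
    by (simp only: distrib_left distrib_right mult.assoc add.assoc)
  also have "... = sc c * (b ^ j * a ^ Suc m) + sc (c * (of_nat j + x)) * (b ^ Suc j * a ^ m)"
    by (simp only: sc_props(2,3)[OF sc] sc_nat[OF sc] distrib_left)
  finally show ?thesis .
qed

lemma main:
  fixes a b :: "'a::ring_1"
  assumes sc: "complex_scalars sc" and r: "a * b - b * a = b ^ 2"
  shows "(a + sc x * b) ^ p =
    (\<Sum>j=0..p. sc (pochhammer x j * of_nat (p choose j)) * (b ^ j * a ^ (p - j)))"
proof (induction p)
  case 0 then show ?case by (simp add: sc_props[OF sc])
next
  case (Suc p)
  define cp where "cp j = pochhammer x j * of_nat (p choose j)" for j
  define T where "T k = b ^ k * a ^ (Suc p - k)" for k
  have "(a + sc x * b) ^ Suc p = (a + sc x * b) * (\<Sum>j=0..p. sc (cp j) * (b ^ j * a ^ (p - j)))"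
    using Suc by (simp add: cp_def)
  also have "... = (\<Sum>j=0..p. sc (cp j) * T j + sc (cp j * (of_nat j + x)) * T (Suc j))"
    unfolding sum_distrib_left
  proof (rule sum.cong[OF refl])
    fix j assume "j \<in> {0..p}"
    then have "Suc (p - j) = Suc p - j" by auto
    then show "(a + sc x * b) * (sc (cp j) * (b ^ j * a ^ (p - j))) =
      sc (cp j) * T j + sc (cp j * (of_nat j + x)) * T (Suc j)"
      unfolding step[OF sc r] T_def by simp
  qed
  also have "... = (\<Sum>j=0..p. sc (cp j) * T j) + (\<Sum>j=0..p. sc (cp j * (of_nat j + x)) * T (Suc j))"
    by (simp add: sum.distrib)
  also have "(\<Sum>j=0..p. sc (cp j) * T j) = (\<Sum>j=0..Suc p. sc (cp j) * T j)"
    by (simp add: cp_def sc_zero[OF sc] binomial_eq_0)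
  also have "... = sc (cp 0) * T 0 + (\<Sum>j=0..p. sc (cp (Suc j)) * T (Suc j))"
    by (subst sum.atLeast0_atMost_Suc_shift) simp
  finally have A: "(a + sc x * b) ^ Suc p = sc (cp 0) * T 0 +
     (\<Sum>j=0..p. sc (cp (Suc j)) * T (Suc j) + sc (cp j * (of_nat j + x)) * T (Suc j))"
    by (simp only: sum.distrib add.assoc)
  have B: "(\<Sum>j=0..Suc p. sc (pochhammer x j * of_nat (Suc p choose j)) * (b ^ j * a ^ (Suc p - j)))
     = sc (cp 0) * T 0 + (\<Sum>j=0..p. sc (pochhammer x (Suc j) * of_nat (Suc p choose Suc j)) * T (Suc j))"
    by (subst sum.atLeast0_atMost_Suc_shift) (simp add: T_def cp_def)
  have C: "sc (pochhammer x (Suc j) * of_nat (Suc p choose Suc j)) * T (Suc j) =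
     sc (cp (Suc j)) * T (Suc j) + sc (cp j * (of_nat j + x)) * T (Suc j)" for j
  proof -
    have "pochhammer x (Suc j) * of_nat (Suc p choose Suc j) = cp (Suc j) + cp j * (of_nat j + x)"
      unfolding cp_def by (simp only: binomial_Suc_Suc of_nat_add pochhammer_Suc distrib_left distrib_right mult_ac add_ac)
    then show ?thesis by (simp only: sc_props(2)[OF sc] distrib_right)
  qed
  show ?case unfolding A B C ..
qed

theorem corollary1p1p2:
  fixes sc :: "complex \<Rightarrow> 'a::ring_1" and a b :: 'a and x :: complex and p :: nat
  assumes "complex_scalars sc"
    and "a * b - b * a = b ^ 2"
  shows "(a + sc x * b) ^ p =
         (\<Sum>j=0..p. sc (pochhammer x j) * of_nat (p choose j) * b ^ j * a ^ (p - j))"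
  unfolding main[OF assms]
  by (rule sum.cong[OF refl]) (simp add: sc_props[OF assms(1)] sc_nat[OF assms(1)] mult.assoc)

end
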